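(* Let $\mathcal U$ be a finite nonempty set, $\epsilon_1,\epsilon_2\in(0,1]$, $n_b$ a positive integer, and for each $v\in\mathcal U$ let $a_v\ge0$ be an integer, $\mu_v\in\mathbb R$ and $\sigma_v^2\ge0$. For $p\in I:=[\max\{\epsilon_1,\epsilon_2\},1]$ define $$h_v(p)=\Big(\frac1{\epsilon_2}-\frac1p\Big)a_v^2\mu_v^2n_b+\Big(\frac1{\epsilon_1}-\frac1p\Big)a_v(\mu_v^2+\sigma_v^2)n_b^2+\Big(\frac{p}{\epsilon_1\epsilon_2}-\frac1{\epsilon_1}-\frac1{\epsilon_2}+\frac1p\Big)a_v(\mu_v^2+\sigma_v^2)n_b+\Big(\frac1p-1\Big)a_v^2\mu_v^2n_b^2,$$ $h^*(p)=\max_{v\in\mathcal U}h_v(p)$, and $h'(p)=\max\{h_{v_1}(p),h_{v_2}(p)\}$, where $v_1\in\arg\max_v a_v^2\mu_v^2$ and $v_2\in\arg\max_v a_v(\mu_v^2+\sigma_v^2)$. Let $p'\in\arg\min_{p\in I}h'(p)$ and $p^*\in\arg\min_{p\in I}h^*(p)$. Then $h^*(p')\le 2h^*(p^* )$.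
   Context: Interpretation: $h_v(p)$ is the variance of the SUM join estimator when both tables use universe sampling rate $p$ and uniform sampling rates $\epsilon_1/p$, $\epsilon_2/p$, and all $n_b$ tuples of the second table have join value $v$; $a_v$ is the number of tuples of the first table with join value $v$, and $\mu_v,\sigma_v^2$ are the mean and variance of the aggregated column over those tuples. $h^*$ is the worst-case variance over such concentrated second tables. *)

theory Defs
  imports Complex_Main
begin

text \<open>Variance h_v(p) of the SUM join estimator, for a concentrated second table
  (all n_b tuples with join value v).  Parameters: eps1, eps2 (uniform rates
  times p), nb, a v (count of value v in table 1), mu v, s2 v (mean and variance
  sigma_v^2 of the aggregated column for value v).\<close>
definition hv :: "real \<Rightarrow> real \<Rightarrow> nat \<Rightarrow> ('a \<Rightarrow> nat) \<Rightarrow> ('a \<Rightarrow> real) \<Rightarrow> ('a \<Rightarrow> real)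
    \<Rightarrow> 'a \<Rightarrow> real \<Rightarrow> real" where
  "hv eps1 eps2 nb a mu s2 v p =
     (1/eps2 - 1/p) * (real (a v))^2 * (mu v)^2 * real nb
   + (1/eps1 - 1/p) * real (a v) * ((mu v)^2 + s2 v) * (real nb)^2
   + (p/(eps1*eps2) - 1/eps1 - 1/eps2 + 1/p) * real (a v) * ((mu v)^2 + s2 v) * real nb
   + (1/p - 1) * (real (a v))^2 * (mu v)^2 * (real nb)^2"

definition hstar :: "'a set \<Rightarrow> real \<Rightarrow> real \<Rightarrow> nat \<Rightarrow> ('a \<Rightarrow> nat) \<Rightarrow> ('a \<Rightarrow> real)
    \<Rightarrow> ('a \<Rightarrow> real) \<Rightarrow> real \<Rightarrow> real" where
  "hstar U eps1 eps2 nb a mu s2 p = Max ((\<lambda>v. hv eps1 eps2 nb a mu s2 v p) ` U)"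

definition Ival :: "real \<Rightarrow> real \<Rightarrow> real set" where
  "Ival eps1 eps2 = {max eps1 eps2 .. 1}"

end

theory Submission
  imports Defs
begin

lemma hv_split:
  assumes "p \<noteq> 0"
  shows "hv e1 e2 nb a mu s2 v p =
     ((real (a v))^2 * (mu v)^2) * ((1/e2 - 1/p) * real nb + (1/p - 1) * (real nb)^2)
   + (real (a v) * ((mu v)^2 + s2 v)) * ((1/e1 - 1/p) * (real nb)^2 + ((1/e1 - 1/p) * (p/e2 - 1)) * real nb)"
proof -
  have "(1/e1 - 1/p) * (p/e2 - 1) = p/(e1*e2) - 1/e1 - 1/e2 + 1/p"
    using assms by (simp add: algebra_simps)
  then show ?thesis unfolding hv_def by (simp only:) (simp add: algebra_simps add_divide_distrib)
qed

lemma coefA_nonneg: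
  assumes "0 < e2" "e2 \<le> p" "p \<le> 1"
  shows "0 \<le> (1/e2 - 1/p) * real nb + (1/p - 1) * (real nb)^2"
proof -
  have "1/p \<le> 1/e2" using assms by (simp add: frac_le)
  moreover have "1 \<le> 1/p" using assms by simp
  ultimately show ?thesis by (intro add_nonneg_nonneg mult_nonneg_nonneg) auto
qed

lemma coefB_nonneg:
  assumes "0 < e1" "e1 \<le> p" "0 < e2" "e2 \<le> p" "p \<le> 1"
  shows "0 \<le> (1/e1 - 1/p) * (real nb)^2 + ((1/e1 - 1/p) * (p/e2 - 1)) * real nb"
proof -
  have "1/p \<le> 1/e1" using assms by (simp add: frac_le)
  moreover have "1 \<le> p/e2" using assms by simp
  ultimately show ?thesis by (intro add_nonneg_nonneg mult_nonneg_nonneg) auto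
qed

theorem corollary2:
  fixes U :: "'a set" and eps1 eps2 :: real and nb :: nat
    and a :: "'a \<Rightarrow> nat" and mu s2 :: "'a \<Rightarrow> real"
    and v1 v2 :: 'a and p' pstar :: real
  assumes "finite U" and "U \<noteq> {}"
    and "0 < eps1" and "eps1 \<le> 1" and "0 < eps2" and "eps2 \<le> 1"
    and "0 < nb"
    and "\<forall>v\<in>U. 0 \<le> s2 v"
    and "v1 \<in> U" and "\<forall>v\<in>U. (real (a v))^2 * (mu v)^2 \<le> (real (a v1))^2 * (mu v1)^2"
    and "v2 \<in> U" and "\<forall>v\<in>U. real (a v) * ((mu v)^2 + s2 v) \<le> real (a v2) * ((mu v2)^2 + s2 v2)"
    and "p' \<in> Ival eps1 eps2"
    and "\<forall>p\<in>Ival eps1 eps2.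
           max (hv eps1 eps2 nb a mu s2 v1 p') (hv eps1 eps2 nb a mu s2 v2 p')
         \<le> max (hv eps1 eps2 nb a mu s2 v1 p) (hv eps1 eps2 nb a mu s2 v2 p)"
    and "pstar \<in> Ival eps1 eps2"
    and "\<forall>p\<in>Ival eps1 eps2. hstar U eps1 eps2 nb a mu s2 pstar \<le> hstar U eps1 eps2 nb a mu s2 p"
  shows "hstar U eps1 eps2 nb a mu s2 p' \<le> 2 * hstar U eps1 eps2 nb a mu s2 pstar"
  proof -
  note A = assms
  define X where "X v = (real (a v))^2 * (mu v)^2" for v
  define Y where "Y v = real (a v) * ((mu v)^2 + s2 v)" for v
  define CA where "CA p = (1/eps2 - 1/p) * real nb + (1/p - 1) * (real nb)^2" for p
  define CB where "CB p = (1/eps1 - 1/p) * (real nb)^2 + ((1/eps1 - 1/p) * (p/eps2 - 1)) * real nb" for p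
  have hs: "p \<in> Ival eps1 eps2 \<Longrightarrow> hv eps1 eps2 nb a mu s2 v p = X v * CA p + Y v * CB p" for v p
    unfolding X_def Y_def CA_def CB_def using A(3) by (intro hv_split) (auto simp: Ival_def)
  have Xn: "0 \<le> X v" for v unfolding X_def by simp
  have Yn: "v \<in> U \<Longrightarrow> 0 \<le> Y v" for v unfolding Y_def using A(8) by simp
  have bnd: "p \<in> Ival eps1 eps2 \<Longrightarrow> 0 \<le> CA p \<and> 0 \<le> CB p" for p
    unfolding CA_def CB_def Ival_def using A(3,5) coefA_nonneg coefB_nonneg by auto
  let ?h = "\<lambda>v p. hv eps1 eps2 nb a mu s2 v p"
  let ?H = "hstar U eps1 eps2 nb a mu s2"
  have up: "?H p \<le> 2 * max (?h v1 p) (?h v2 p)" if p: "p \<in> Ival eps1 eps2" for p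
  proof -
    have "\<forall>x\<in>(\<lambda>v. ?h v p) ` U. x \<le> 2 * max (?h v1 p) (?h v2 p)"
    proof
      fix x assume "x \<in> (\<lambda>v. ?h v p) ` U"
      then obtain v where v: "v \<in> U" "x = ?h v p" by auto
      have c: "0 \<le> CA p" "0 \<le> CB p" using bnd[OF p] by auto
      have "X v * CA p \<le> X v1 * CA p" using A(10) v c unfolding X_def by (simp add: mult_right_mono)
      moreover have "Y v * CB p \<le> Y v2 * CB p" using A(12) v c unfolding Y_def by (simp add: mult_right_mono)
      moreover have "0 \<le> Y v1 * CB p" using Yn[OF A(9)] c by simp
      moreover have "0 \<le> X v2 * CA p" using Xn c by simp
      ultimately have "x \<le> ?h v1 p + ?h v2 p" using v hs[OF p] by simp
      then show "x \<le> 2 * max (?h v1 p) (?h v2 p)" by simp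
    qed
    then show ?thesis unfolding hstar_def using A(1,2) by (subst Max_le_iff) auto
  qed
  have low: "max (?h v1 p) (?h v2 p) \<le> ?H p" for p
    unfolding hstar_def using A(1,9,11) by (auto intro!: Max_ge)
  have "?H p' \<le> 2 * max (?h v1 p') (?h v2 p')" using up A(13) by blast
  also have "\<dots> \<le> 2 * max (?h v1 pstar) (?h v2 pstar)" using A(14,15) by auto
  also have "\<dots> \<le> 2 * ?H pstar" using low by simp
  finally show ?thesis .
qed

end
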